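(* Let $(q(x),q(x,dy))$ be a totally stable conservative $q$-pair on a measurable space $(E,\mathscr E)$ and let $c:E\to\mathbb R$ be measurable with $\sup_x c(x)\le0$ and $q(x)-c(x)>0$ for all $x$. Set $\Omega f(x)=\int_Eq(x,dy)[f(y)-f(x)]+c(x)f(x)$. Define $z^{(0)}\equiv1$ and $z^{(n+1)}(x)=\int_E\frac{q(x,dy)}{q(x)-c(x)}z^{(n)}(y)$, $x\in E$, $n\ge0$. Then $z^{(n)}(x)$ is non-increasing in $n$ for each $x$, with limit $\bar z(x)\in[0,1]$, and there exists a bounded measurable $h:E\to\mathbb R$, not identically zero, with $\Omega h(x)=0$ for all $x\in E$ if and only if $\bar z$ is not identically zero.
   Context: A $q$-pair $(q(x),q(x,dy))$ on $(E,\mathscr E)$: for each $x$, $q(x,\cdot)$ is a nonnegative measure on $\mathscr E$, $x\mapsto q(x,A)$ is measurable; totally stable means $q(x)<\infty$ for all $x$, conservative means $q(x)=q(x,E)$ for all $x$. *)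

theory Defs
  imports "HOL-Probability.Probability"
begin

text \<open>A q-pair on the measurable space M: q :: 'a \<Rightarrow> real (total rate, finite = totally stable)
  and a kernel qk :: 'a \<Rightarrow> 'a measure, each qk x a measure on the sets of M, with
  x \<mapsto> qk x A measurable.\<close>

definition q_pair :: "'a measure \<Rightarrow> ('a \<Rightarrow> real) \<Rightarrow> ('a \<Rightarrow> 'a measure) \<Rightarrow> bool" where
  "q_pair M q qk \<longleftrightarrow>
     (\<forall>x\<in>space M. sets (qk x) = sets M) \<and>
     (\<forall>A\<in>sets M. (\<lambda>x. emeasure (qk x) A) \<in> borel_measurable M) \<and>
     q \<in> borel_measurable M \<and> (\<forall>x\<in>space M. 0 \<le> q x)"

definition conservative_q_pair :: "'a measure \<Rightarrow> ('a \<Rightarrow> real) \<Rightarrow> ('a \<Rightarrow> 'a measure) \<Rightarrow> bool" where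
  "conservative_q_pair M q qk \<longleftrightarrow> (\<forall>x\<in>space M. emeasure (qk x) (space M) = ennreal (q x))"

definition Omega_op :: "('a \<Rightarrow> 'a measure) \<Rightarrow> ('a \<Rightarrow> real) \<Rightarrow> ('a \<Rightarrow> real) \<Rightarrow> 'a \<Rightarrow> real" where
  "Omega_op qk c f x = (\<integral>y. (f y - f x) \<partial>qk x) + c x * f x"

fun zseq :: "('a \<Rightarrow> real) \<Rightarrow> ('a \<Rightarrow> 'a measure) \<Rightarrow> ('a \<Rightarrow> real) \<Rightarrow> nat \<Rightarrow> 'a \<Rightarrow> real" where
  "zseq q qk c 0 = (\<lambda>x. 1)"
| "zseq q qk c (Suc n) = (\<lambda>x. (\<integral>y. zseq q qk c n y \<partial>qk x) / (q x - c x))"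

definition zbar :: "('a \<Rightarrow> real) \<Rightarrow> ('a \<Rightarrow> 'a measure) \<Rightarrow> ('a \<Rightarrow> real) \<Rightarrow> 'a \<Rightarrow> real" where
  "zbar q qk c x = lim (\<lambda>n. zseq q qk c n x)"

end

theory Submission
  imports Defs
begin

locale qsetup =
  fixes M :: "'a measure" and q :: "'a \<Rightarrow> real" and qk :: "'a \<Rightarrow> 'a measure"
    and c :: "'a \<Rightarrow> real"
  assumes qp: "q_pair M q qk"
    and cons: "conservative_q_pair M q qk"
    and cm: "c \<in> borel_measurable M"
    and cle: "\<forall>x\<in>space M. c x \<le> 0"
    and pos: "\<forall>x\<in>space M. q x - c x > 0"
begin

lemma qm: "q \<in> borel_measurable M" using qp unfolding q_pair_def by auto

lemma qnn: "x \<in> space M \<Longrightarrow> 0 \<le> q x" using qp unfolding q_pair_def by auto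

lemma sets_qk: "x \<in> space M \<Longrightarrow> sets (qk x) = sets M"
  using qp unfolding q_pair_def by auto

lemma space_qk: "x \<in> space M \<Longrightarrow> space (qk x) = space M"
  using sets_qk by (rule sets_eq_imp_space_eq)

lemma em_qk: "x \<in> space M \<Longrightarrow> emeasure (qk x) (space M) = ennreal (q x)"
  using cons unfolding conservative_q_pair_def by auto

lemma fin_qk: "x \<in> space M \<Longrightarrow> finite_measure (qk x)"
  by (rule finite_measureI) (simp add: space_qk em_qk)

lemma measure_qk: "x \<in> space M \<Longrightarrow> measure (qk x) (space (qk x)) = q x"
  by (simp add: measure_def space_qk em_qk qnn)

lemma meas_qk: "x \<in> space M \<Longrightarrow> f \<in> borel_measurable M \<Longrightarrow> f \<in> borel_measurable (qk x)"
  using measurable_cong_sets[OF sets_qk refl] by blast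

lemma integrable_qk:
  fixes f :: "'a \<Rightarrow> real"
  assumes x: "x \<in> space M" and f: "f \<in> borel_measurable M" and B: "\<forall>y\<in>space M. \<bar>f y\<bar> \<le> B"
  shows "integrable (qk x) f"
proof -
  interpret finite_measure "qk x" using fin_qk[OF x] .
  show ?thesis
    by (rule integrable_const_bound[where B=B]) (auto simp: space_qk[OF x] B meas_qk[OF x f])
qed

lemma int_meas:
  fixes f :: "'a \<Rightarrow> real"
  assumes f: "f \<in> borel_measurable M" and nn: "\<forall>y\<in>space M. 0 \<le> f y"
  shows "(\<lambda>x. \<integral>y. f y \<partial>qk x) \<in> borel_measurable M"
proof -
  define L where "L x = scale_measure (ennreal (1/(q x - c x))) (qk x)" for x
  have inv: "(\<lambda>a. ennreal (1/(q a - c a))) \<in> borel_measurable M"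
    using qm cm by measurable
  have L: "L \<in> M \<rightarrow>\<^sub>M subprob_algebra M"
  proof (rule measurable_subprob_algebra)
    fix a assume a: "a \<in> space M"
    have "emeasure (L a) (space (L a)) = ennreal (1/(q a - c a)) * ennreal (q a)"
      by (simp add: L_def space_scale_measure space_qk[OF a] em_qk[OF a])
    also have "\<dots> = ennreal (q a / (q a - c a))"
      using pos a qnn[OF a] by (subst ennreal_mult[symmetric]) auto
    also have "\<dots> \<le> 1" using pos a cle by (auto simp: divide_le_eq_1)
    finally show "subprob_space (L a)"
      using a by (intro subprob_spaceI) (auto simp: L_def space_scale_measure space_qk)
    show "sets (L a) = sets M" using a by (simp add: L_def sets_qk)
  next
    fix A assume A: "A \<in> sets M"
    have "(\<lambda>a. ennreal (1/(q a - c a)) * emeasure (qk a) A) \<in> borel_measurable M"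
      using qp A inv unfolding q_pair_def by (intro borel_measurable_times_ennreal) auto
    then show "(\<lambda>a. emeasure (L a) A) \<in> borel_measurable M"
      by (simp add: L_def)
  qed
  have nnL: "(\<lambda>x. \<integral>\<^sup>+y. ennreal (f y) \<partial>L x) \<in> borel_measurable M"
    by (rule measurable_compose[OF L nn_integral_measurable_subprob_algebra]) (use f in measurable)
  have eq: "(\<integral>y. f y \<partial>qk x) = enn2real (ennreal (q x - c x) * (\<integral>\<^sup>+y. ennreal (f y) \<partial>L x))"
    if x: "x \<in> space M" for x
  proof -
    have "(\<integral>\<^sup>+y. ennreal (f y) \<partial>L x) = ennreal (1/(q x - c x)) * (\<integral>\<^sup>+y. ennreal (f y) \<partial>qk x)"
      unfolding L_def by (rule nn_integral_scale_measure) (use meas_qk[OF x f] in measurable)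
    note sc = this
    have "ennreal (q x - c x) * (\<integral>\<^sup>+y. ennreal (f y) \<partial>L x) = (\<integral>\<^sup>+y. ennreal (f y) \<partial>qk x)"
    proof -
      have "ennreal (q x - c x) * ennreal (1/(q x - c x)) = 1"
        using pos x by (subst ennreal_mult[symmetric]) auto
      then show ?thesis by (simp add: sc mult.assoc[symmetric])
    qed
    moreover have "(\<integral>y. f y \<partial>qk x) = enn2real (\<integral>\<^sup>+y. ennreal (f y) \<partial>qk x)"
      by (rule integral_eq_nn_integral) (auto simp: meas_qk[OF x f] space_qk[OF x] nn)
    ultimately show ?thesis by simp
  qed
  have "(\<lambda>x. enn2real (ennreal (q x - c x) * (\<integral>\<^sup>+y. ennreal (f y) \<partial>L x))) \<in> borel_measurable M"
    using qm cm nnL by measurable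
  then show ?thesis by (rule measurable_cong[THEN iffD1, rotated]) (simp add: eq)
qed

abbreviation "z \<equiv> zseq q qk c"

lemma zbounds: "z n \<in> borel_measurable M \<and> (\<forall>x\<in>space M. 0 \<le> z n x \<and> z n x \<le> 1)"
proof (induction n)
  case 0
  then show ?case by simp
next
  case (Suc n)
  then have zm: "z n \<in> borel_measurable M" and zb: "\<And>x. x \<in> space M \<Longrightarrow> 0 \<le> z n x \<and> z n x \<le> 1"
    by auto
  have "(\<lambda>x. (\<integral>y. z n y \<partial>qk x) / (q x - c x)) \<in> borel_measurable M"
    using int_meas[OF zm] zb qm cm by (intro borel_measurable_divide borel_measurable_diff) auto
  moreover have "0 \<le> z (Suc n) x \<and> z (Suc n) x \<le> 1" if x: "x \<in> space M" for x
  proof -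
    have i1: "integrable (qk x) (z n)"
      by (rule integrable_qk[OF x zm, where B=1]) (use zb in auto)
    have i2: "integrable (qk x) (\<lambda>y. 1::real)"
      by (rule integrable_qk[OF x, where B=1]) auto
    have a: "0 \<le> (\<integral>y. z n y \<partial>qk x)"
      by (intro integral_nonneg_AE AE_I2) (use zb space_qk[OF x] in auto)
    have "(\<integral>y. z n y \<partial>qk x) \<le> (\<integral>y. 1 \<partial>qk x)"
      by (rule integral_mono[OF i1 i2]) (use zb space_qk[OF x] in auto)
    also have "\<dots> = q x" using measure_qk[OF x] by simp
    also have "\<dots> \<le> q x - c x" using cle x by auto
    finally have b: "(\<integral>y. z n y \<partial>qk x) \<le> q x - c x" .
    show ?thesis using a b pos x by (auto simp: divide_le_eq_1)
  qed
  ultimately show ?case by simp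
qed

lemma zm: "z n \<in> borel_measurable M" using zbounds by blast
lemma z0: "x \<in> space M \<Longrightarrow> 0 \<le> z n x" using zbounds by blast
lemma z1: "x \<in> space M \<Longrightarrow> z n x \<le> 1" using zbounds by blast

lemma zint: "x \<in> space M \<Longrightarrow> integrable (qk x) (z n)"
  by (rule integrable_qk[OF _ zm, where B=1]) (use z0 z1 in auto)

lemma zsuc: "z (Suc n) x = (\<integral>y. z n y \<partial>qk x) / (q x - c x)" by simp

lemma zdec: "x \<in> space M \<Longrightarrow> z (Suc n) x \<le> z n x"
proof (induction n arbitrary: x)
  case 0
  then show ?case using z1[of x "Suc 0"] by simp
next
  case (Suc n)
  have "(\<integral>y. z (Suc n) y \<partial>qk x) \<le> (\<integral>y. z n y \<partial>qk x)"
    by (rule integral_mono[OF zint zint]) (use Suc space_qk[OF Suc.prems] in auto)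
  then have "(\<integral>y. z (Suc n) y \<partial>qk x) / (q x - c x) \<le> (\<integral>y. z n y \<partial>qk x) / (q x - c x)"
    using pos Suc.prems by (intro divide_right_mono) auto
  then show ?case by (simp only: zsuc)
qed

lemma zdecseq: "x \<in> space M \<Longrightarrow> decseq (\<lambda>n. z n x)"
  using zdec by (simp add: decseq_Suc_iff)

lemma zlim: "x \<in> space M \<Longrightarrow> (\<lambda>n. z n x) \<longlonglongrightarrow> zbar q qk c x"
proof -
  assume x: "x \<in> space M"
  have "convergent (\<lambda>n. z n x)"
  proof (rule Bseq_monoseq_convergent)
    show "Bseq (\<lambda>n. z n x)"
      by (rule BseqI'[where K=1]) (use z0[OF x] z1[OF x] in auto)
    show "monoseq (\<lambda>n. z n x)" using zdecseq[OF x] by (rule decseq_imp_monoseq)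
  qed
  then show ?thesis unfolding zbar_def by (simp add: convergent_LIMSEQ_iff)
qed

lemma zbar0: "x \<in> space M \<Longrightarrow> 0 \<le> zbar q qk c x"
  using zlim z0 by (intro LIMSEQ_le_const[OF zlim]) auto

lemma zbar1: "x \<in> space M \<Longrightarrow> zbar q qk c x \<le> 1"
  using zlim z1 by (intro LIMSEQ_le_const2[OF zlim]) auto

lemma zbarm: "zbar q qk c \<in> borel_measurable M"
  by (rule borel_measurable_LIMSEQ_real[OF zlim zm])

lemma omega_eq:
  assumes x: "x \<in> space M" and hm: "h \<in> borel_measurable M" and B: "\<forall>y\<in>space M. \<bar>h y\<bar> \<le> B"
  shows "Omega_op qk c h x = (\<integral>y. h y \<partial>qk x) - (q x - c x) * h x"
proof -
  have "(\<integral>y. (h y - h x) \<partial>qk x) = (\<integral>y. h y \<partial>qk x) - (\<integral>y. h x \<partial>qk x)"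
    by (rule Bochner_Integration.integral_diff) (auto intro!: integrable_qk[OF x hm B] integrable_qk[OF x, where B="\<bar>h x\<bar>"])
  also have "(\<integral>y. h x \<partial>qk x) = q x * h x" using measure_qk[OF x] by simp
  finally show ?thesis unfolding Omega_op_def by (simp add: algebra_simps)
qed

lemma zbar_eq:
  assumes x: "x \<in> space M"
  shows "(\<integral>y. zbar q qk c y \<partial>qk x) = (q x - c x) * zbar q qk c x"
proof -
  have "(\<lambda>n. \<integral>y. z n y \<partial>qk x) \<longlonglongrightarrow> (\<integral>y. zbar q qk c y \<partial>qk x)"
  proof (rule integral_dominated_convergence[where w="\<lambda>y. 1"])
    show "zbar q qk c \<in> borel_measurable (qk x)" by (rule meas_qk[OF x zbarm])
    show "z n \<in> borel_measurable (qk x)" for n by (rule meas_qk[OF x zm])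
    show "integrable (qk x) (\<lambda>y. 1::real)" by (rule integrable_qk[OF x, where B=1]) auto
    show "AE y in qk x. (\<lambda>n. z n y) \<longlonglongrightarrow> zbar q qk c y"
      by (rule AE_I2) (use zlim space_qk[OF x] in auto)
    show "AE y in qk x. norm (z n y) \<le> 1" for n
      by (rule AE_I2) (use z0 z1 space_qk[OF x] in auto)
  qed
  moreover have "(\<lambda>n. \<integral>y. z n y \<partial>qk x) = (\<lambda>n. (q x - c x) * z (Suc n) x)"
    using pos x by (auto simp: zsuc)
  moreover have "(\<lambda>n. (q x - c x) * z (Suc n) x) \<longlonglongrightarrow> (q x - c x) * zbar q qk c x"
    by (intro tendsto_mult_left LIMSEQ_Suc zlim[OF x])
  ultimately show ?thesis using LIMSEQ_unique by metis
qed

lemma hbound: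
  assumes hm: "h \<in> borel_measurable M" and B: "\<forall>y\<in>space M. \<bar>h y\<bar> \<le> B"
    and om: "\<forall>x\<in>space M. Omega_op qk c h x = 0"
  shows "x \<in> space M \<Longrightarrow> \<bar>h x\<bar> \<le> B * z n x"
proof (induction n arbitrary: x)
  case 0
  then show ?case using B by simp
next
  case (Suc n)
  note x = Suc.prems
  have hx: "h x = (\<integral>y. h y \<partial>qk x) / (q x - c x)"
    using omega_eq[OF x hm B] om x pos by (auto simp: field_simps)
  have "\<bar>\<integral>y. h y \<partial>qk x\<bar> \<le> (\<integral>y. \<bar>h y\<bar> \<partial>qk x)" by (rule integral_abs_bound)
  also have "\<dots> \<le> (\<integral>y. B * z n y \<partial>qk x)"
  proof (rule integral_mono)
    show "integrable (qk x) (\<lambda>y. \<bar>h y\<bar>)"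
      by (rule integrable_qk[OF x _ , where B=B]) (use hm B in auto)
    show "integrable (qk x) (\<lambda>y. B * z n y)"
      by (rule integrable_qk[OF x borel_measurable_times[OF borel_measurable_const zm], where B="\<bar>B\<bar>"]) (use z0 z1 in \<open>auto simp: abs_mult intro!: mult_left_le[where c="z n _"]\<close>)
    show "\<bar>h y\<bar> \<le> B * z n y" if "y \<in> space (qk x)" for y
      using Suc.IH that space_qk[OF x] by auto
  qed
  also have "\<dots> = B * (\<integral>y. z n y \<partial>qk x)" by simp
  finally have "\<bar>h x\<bar> \<le> B * (\<integral>y. z n y \<partial>qk x) / (q x - c x)"
    apply -
  proof -
    have p: "0 < q x - c x" using pos x by auto
    assume a: "\<bar>\<integral>y. h y \<partial>qk x\<bar> \<le> B * (\<integral>y. z n y \<partial>qk x)"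
    have "\<bar>h x\<bar> = \<bar>\<integral>y. h y \<partial>qk x\<bar> / (q x - c x)" using hx p by (simp add: abs_div)
    also have "\<dots> \<le> B * (\<integral>y. z n y \<partial>qk x) / (q x - c x)" using a p by (rule divide_right_mono[OF _ less_imp_le])
    finally show ?thesis .
  qed
  then show ?case by (simp only: zsuc) simp
qed

end

theorem mainTheorem6:
  fixes M :: "'a measure" and q :: "'a \<Rightarrow> real" and qk :: "'a \<Rightarrow> 'a measure"
    and c :: "'a \<Rightarrow> real"
  assumes "q_pair M q qk"
    and "conservative_q_pair M q qk"
    and "c \<in> borel_measurable M"
    and "\<forall>x\<in>space M. c x \<le> 0"
    and "\<forall>x\<in>space M. q x - c x > 0"
  shows "(\<forall>x\<in>space M. decseq (\<lambda>n. zseq q qk c n x)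
            \<and> (\<lambda>n. zseq q qk c n x) \<longlonglongrightarrow> zbar q qk c x
            \<and> 0 \<le> zbar q qk c x \<and> zbar q qk c x \<le> 1)
       \<and> ((\<exists>h \<in> borel_measurable M. bounded (h ` space M)
              \<and> (\<exists>x\<in>space M. h x \<noteq> 0)
              \<and> (\<forall>x\<in>space M. Omega_op qk c h x = 0))
          \<longleftrightarrow> (\<exists>x\<in>space M. zbar q qk c x \<noteq> 0))"
proof -
  interpret qsetup M q qk c using assms by unfold_locales
  have part1: "\<forall>x\<in>space M. decseq (\<lambda>n. zseq q qk c n x)
            \<and> (\<lambda>n. zseq q qk c n x) \<longlonglongrightarrow> zbar q qk c x
            \<and> 0 \<le> zbar q qk c x \<and> zbar q qk c x \<le> 1"
    using zdecseq zlim zbar0 zbar1 by blast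
  have "(\<exists>x\<in>space M. zbar q qk c x \<noteq> 0)"
    if h: "h \<in> borel_measurable M" "bounded (h ` space M)" "x0 \<in> space M" "h x0 \<noteq> 0"
       "\<forall>x\<in>space M. Omega_op qk c h x = 0" for h x0
  proof -
    obtain B where B: "\<forall>y\<in>space M. \<bar>h y\<bar> \<le> B" using h(2) unfolding bounded_pos by auto
    have "\<bar>h x0\<bar> \<le> B * zbar q qk c x0"
      by (rule LIMSEQ_le_const[OF tendsto_mult_left[OF zlim[OF h(3)]]])
         (use hbound[OF h(1) B h(5) h(3)] in auto)
    then show ?thesis using h(3,4) by (intro bexI[of _ x0]) auto
  qed
  moreover have "\<exists>h \<in> borel_measurable M. bounded (h ` space M)
              \<and> (\<exists>x\<in>space M. h x \<noteq> 0)
              \<and> (\<forall>x\<in>space M. Omega_op qk c h x = 0)"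
    if "\<exists>x\<in>space M. zbar q qk c x \<noteq> 0"
  proof (intro bexI[of _ "zbar q qk c"] conjI)
    have B: "\<forall>y\<in>space M. \<bar>zbar q qk c y\<bar> \<le> 1" using zbar0 zbar1 by auto
    show "bounded (zbar q qk c ` space M)" unfolding bounded_iff using B by auto
    show "\<exists>x\<in>space M. zbar q qk c x \<noteq> 0" by fact
    show "\<forall>x\<in>space M. Omega_op qk c (zbar q qk c) x = 0"
      using omega_eq[OF _ zbarm B] zbar_eq by simp
    show "zbar q qk c \<in> borel_measurable M" by (rule zbarm)
  qed
  ultimately show ?thesis using part1 by blast
qed

end
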